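(* Under the standing setup and assumptions, with $Z_k=\sum_{j=0}^{k-1}a_j$, for every $k\ge1$, $$\mathbb{E}\Big[\frac{\sum_{j=0}^{k-1}a_j\mathcal{L}(\boldsymbol{x}^j,\boldsymbol{\lambda}^j)}{Z_k}\Big]-\mathcal{L}(\boldsymbol{x}^*,\boldsymbol{\lambda}^* )\le\frac{1}{Z_k}\Big(RG\sum_{j=0}^{k-1}(N-\bar A_j(\beta))a_j+(\beta\sigma^2+L^2)\sum_{j=0}^{k-1}a_j^2+2LG\sum_{j=0}^{k-1}(N-\bar A_j(\beta))a_j^2+\mathbb{E}\big[\|\boldsymbol{x}^0-\boldsymbol{x}^*\|^2\big]+L^2\sum_{j=0}^{k-1}(N-\bar A_j(\beta))^2a_j^2\Big).$$
   Context: Standing setup (DPD-AirComp). Let $N\ge1$, $D\ge1$, $\mathcal{N}=\{1,\dots,N\}$. Let $f_0,f_1,\dots,f_N:\mathbb{R}^D\to\mathbb{R}$ be convex (not necessarily differentiable) and $\mathcal{X}\subset\mathbb{R}^D$ nonempty, compact and convex. Consider $\min_{\boldsymbol{x}\in\mathcal{X}} f_0(\boldsymbol{x})$ s.t. $f_i(\boldsymbol{x})\le 0$, $i\in\mathcal{N}$, with optimal value $f_0^*$. Write $\boldsymbol{F}(\boldsymbol{x})=[f_1(\boldsymbol{x}),\dots,f_N(\boldsymbol{x})]^T$, the Lagrangian $\mathcal{L}(\boldsymbol{x},\boldsymbol{\lambda})=f_0(\boldsymbol{x})+\sum_{i=1}^N\lambda_if_i(\boldsymbol{x})$ on $\mathcal{X}\times\mathbb{R}^N_+$,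 and the dual function $q(\boldsymbol{\lambda})=\inf_{\boldsymbol{x}\in\mathcal{X}}\mathcal{L}(\boldsymbol{x},\boldsymbol{\lambda})$. Let $\boldsymbol{g}_i(\boldsymbol{x})$ denote a (fixed choice of) subgradient of $f_i$ at $\boldsymbol{x}$, $i=0,\dots,N$, and $\boldsymbol{\mathcal{L}}_x(\boldsymbol{x},\boldsymbol{\lambda})=\boldsymbol{g}_0(\boldsymbol{x})+\sum_i\lambda_i\boldsymbol{g}_i(\boldsymbol{x})$, $\boldsymbol{\mathcal{L}}_\lambda(\boldsymbol{x},\boldsymbol{\lambda})=\boldsymbol{F}(\boldsymbol{x})$. Let $\bar{\boldsymbol{x}}\in\mathcal{X}$ be a Slater point ($f_i(\bar{\boldsymbol{x}})<0$ for all $i$), $\gamma=\min_{1\le i\le N}\{-f_i(\bar{\boldsymbol{x}})\}$, $\tilde q=q(\tilde{\boldsymbol{\lambda}})$ for some fixed $\tilde{\boldsymbol{\lambda}}\succeq 0$, and for a parameter $r>0$ let $\mathcal{D}=\{\boldsymbol{\lambda}\succeq 0:\|\boldsymbol{\lambda}\|_\infty\le \frac{f_0(\bar{\boldsymbol{x}})-\tilde q}{\gamma}+r\}$. $\mathcal{P}_{\mathcal{S}}[z]=\arg\min_{s\in\mathcal{S}}\|s-z\|^2$ is Euclidean projection. Let $(\boldsymbol{x}^*,\boldsymbol{\lambda}^* )\in\mathcal{X}\times\mathcal{D}$ be a saddle point of $\mathcal{L}$, i.e. $\mathcal{L}(\boldsymbol{x}^*,\boldsymbol{\lambda})\le\mathcal{L}(\boldsymbol{x}^*,\boldsymbol{\lambda}^*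 )\le\mathcal{L}(\boldsymbol{x},\boldsymbol{\lambda}^* )$ for all $\boldsymbol{x}\in\mathcal{X},\boldsymbol{\lambda}\in\mathcal{D}$, with $\mathcal{L}(\boldsymbol{x}^*,\boldsymbol{\lambda}^* )=f_0^*$. Iteration: given initial $\boldsymbol{x}^0\in\mathcal{X}$, $\boldsymbol{\lambda}^0\in\mathcal{D}$, step sizes $a_k\in(0,1)$, a preprocessing scalar $\beta>0$ and a power budget $P_{\max}>0$, at round $k$ set $\boldsymbol{s}_i^k=\lambda_i^k\boldsymbol{g}_i(\boldsymbol{x}^k)$; with random channel coefficients $h_i^k$, the participating set is $\mathcal{A}^k=\{i\in\mathcal{N}: |h_i^k|^2\ge \|\boldsymbol{s}_i^k\|^2/(\beta P_{\max})\}$; the server obtains $\tilde{\boldsymbol{y}}^k=\sum_{i\in\mathcal{A}^k}\boldsymbol{s}_i^k+\sqrt{\beta}\,\boldsymbol{n}^k$, where $\boldsymbol{n}^k\in\mathbb{R}^D$ is zero-mean noise with $\mathbb{E}\|\boldsymbol{n}^k\|^2=\sigma^2$, independent of all other randomness; updates are $\boldsymbol{x}^{k+1}=\mathcal{P}_{\mathcal{X}}[\boldsymbol{x}^k-a_k(\boldsymbol{g}_0(\boldsymbol{x}^k)+\tilde{\boldsymbol{y}}^k)]$ and $\lambda_i^{k+1}=\mathcal{P}_{\mathcal{D}}[\lambda_i^k+a_kf_i(\boldsymbol{x}^k)]$ (componentwise projection onto $[0,\frac{f_0(\bar{\boldsymbol{x}})-\tilde q}{\gamma}+r]$). $\bar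 A_k(\beta)=\mathbb{E}[|\mathcal{A}^k|]$ is the average number of participating users in round $k$. Expectations are over channels and noise. Assumptions: there are constants $G,L,R>0$ with $L>G$ such that for all $i,k$: $\|\lambda_i^k\boldsymbol{g}_i(\boldsymbol{x}^k)\|\le G$, $\|\boldsymbol{\mathcal{L}}_x(\boldsymbol{x}^k,\boldsymbol{\lambda}^k)\|\le L$, $\|\boldsymbol{F}(\boldsymbol{x}^k)\|\le L$, and $\|\boldsymbol{x}^k-\boldsymbol{x}^*\|\le R$. *)

theory Defs
  imports "HOL-Analysis.Analysis" "HOL-Probability.Probability"
begin

definition is_subgradient :: "('a::real_inner \<Rightarrow> real) \<Rightarrow> 'a \<Rightarrow> 'a \<Rightarrow> bool" where
  "is_subgradient f x v \<longleftrightarrow> (\<forall>y. f y \<ge> f x + inner v (y - x))"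

text \<open>Lagrangian L(x,lambda) = f_0(x) + sum_{i=1}^N lambda_i f_i(x).
  Multipliers are functions nat => real; only the entries 1..N matter.\<close>
definition lagr :: "(nat \<Rightarrow> 'a \<Rightarrow> real) \<Rightarrow> nat \<Rightarrow> 'a \<Rightarrow> (nat \<Rightarrow> real) \<Rightarrow> real" where
  "lagr f N x lam = f 0 x + (\<Sum>i=1..N. lam i * f i x)"

definition dual_fn :: "(nat \<Rightarrow> 'a \<Rightarrow> real) \<Rightarrow> nat \<Rightarrow> 'a set \<Rightarrow> (nat \<Rightarrow> real) \<Rightarrow> real" where
  "dual_fn f N X lam = Inf ((\<lambda>x. lagr f N x lam) ` X)"

definition opt_val :: "(nat \<Rightarrow> 'a \<Rightarrow> real) \<Rightarrow> nat \<Rightarrow> 'a set \<Rightarrow> real" where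
  "opt_val f N X = Inf (f 0 ` {x \<in> X. \<forall>i\<in>{1..N}. f i x \<le> 0})"

definition dual_box :: "nat \<Rightarrow> real \<Rightarrow> (nat \<Rightarrow> real) set" where
  "dual_box N Bd = {lam. \<forall>i\<in>{1..N}. 0 \<le> lam i \<and> lam i \<le> Bd}"

text \<open>Participating set A^k, given the channel coefficients hk i = h_i^k of round k,
  the current iterate x and multipliers lam.\<close>
definition part_set :: "(nat \<Rightarrow> 'a::real_normed_vector \<Rightarrow> 'a) \<Rightarrow> nat \<Rightarrow> real \<Rightarrow> real
    \<Rightarrow> (nat \<Rightarrow> complex) \<Rightarrow> 'a \<Rightarrow> (nat \<Rightarrow> real) \<Rightarrow> nat set" where
  "part_set g N beta Pmax hk x lam =
     {i \<in> {1..N}. cmod (hk i) ^ 2 \<ge> norm (lam i *\<^sub>R g i x) ^ 2 / (beta * Pmax)}"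

text \<open>The DPD-AirComp iteration for one realisation of channels hw i k = h_i^k
  and noises nw k = n^k. Returns (x^k, lambda^k).\<close>
primrec dpd_iter :: "(nat \<Rightarrow> 'a::euclidean_space \<Rightarrow> real) \<Rightarrow> (nat \<Rightarrow> 'a \<Rightarrow> 'a) \<Rightarrow> 'a set
    \<Rightarrow> nat \<Rightarrow> real \<Rightarrow> real \<Rightarrow> real \<Rightarrow> (nat \<Rightarrow> real)
    \<Rightarrow> (nat \<Rightarrow> nat \<Rightarrow> complex) \<Rightarrow> (nat \<Rightarrow> 'a) \<Rightarrow> 'a \<Rightarrow> (nat \<Rightarrow> real) \<Rightarrow> nat
    \<Rightarrow> 'a \<times> (nat \<Rightarrow> real)" where
  "dpd_iter f g X N Bd beta Pmax a hw nw x0 l0 0 = (x0, l0)"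
| "dpd_iter f g X N Bd beta Pmax a hw nw x0 l0 (Suc k) =
     (let x = fst (dpd_iter f g X N Bd beta Pmax a hw nw x0 l0 k);
          lam = snd (dpd_iter f g X N Bd beta Pmax a hw nw x0 l0 k);
          A = part_set g N beta Pmax (\<lambda>i. hw i k) x lam;
          y = (\<Sum>i\<in>A. lam i *\<^sub>R g i x) + sqrt beta *\<^sub>R nw k
      in (closest_point X (x - a k *\<^sub>R (g 0 x + y)),
          \<lambda>i. closest_point {0..Bd} (lam i + a k * f i x)))"

definition other_rand :: "'w measure \<Rightarrow> (nat \<Rightarrow> nat \<Rightarrow> 'w \<Rightarrow> complex) \<Rightarrow> (nat \<Rightarrow> 'w \<Rightarrow> 'b::topological_space) \<Rightarrow> nat \<Rightarrow> 'w set set" where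
  "other_rand M h n k = sigma_sets (space M)
     ((\<Union>i j. {h i j -` B \<inter> space M | B. B \<in> sets borel})
      \<union> (\<Union>j\<in>-{k}. {n j -` B \<inter> space M | B. B \<in> sets borel}))"

end

theory Submission
  imports Defs
begin


lemma part_set_mem:
  "i \<in> part_set g N beta Pmax hk x lam \<longleftrightarrow> i \<in> {1..N} \<and>
     cmod (hk i) ^ 2 \<ge> norm (lam i *\<^sub>R g i x) ^ 2 / (beta * Pmax)"
  by (simp add: part_set_def)

lemma sum_part_set:
  "(\<Sum>i\<in>part_set g N beta Pmax hk x lam. F i) =
   (\<Sum>i\<in>{1..N}. if cmod (hk i) ^ 2 \<ge> norm (lam i *\<^sub>R g i x) ^ 2 / (beta * Pmax) then F i else 0)"
  unfolding part_set_def by (rule sum.inter_filter) simp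

lemma iter_meas:
  fixes F :: "'w measure"
    and f :: "nat \<Rightarrow> 'a::euclidean_space \<Rightarrow> real"
    and g :: "nat \<Rightarrow> 'a \<Rightarrow> 'a"
  assumes X: "X \<noteq> {}" "closed X" "convex X"
    and Bd: "Bd \<ge> 0"
    and gm: "\<And>i. i \<le> N \<Longrightarrow> g i \<in> borel_measurable borel"
    and fm: "\<And>i. i \<le> N \<Longrightarrow> f i \<in> borel_measurable borel"
    and hm: "\<And>i j. h i j \<in> borel_measurable F"
    and nm: "\<And>j. j < K \<Longrightarrow> n j \<in> borel_measurable F"
  shows "j \<le> K \<Longrightarrow> (\<lambda>\<omega>. fst (dpd_iter f g X N Bd beta Pmax a (\<lambda>i j. h i j \<omega>) (\<lambda>j. n j \<omega>) xi li j)) \<in> borel_measurable F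
     \<and> (\<forall>i\<le>N. (\<lambda>\<omega>. snd (dpd_iter f g X N Bd beta Pmax a (\<lambda>i j. h i j \<omega>) (\<lambda>j. n j \<omega>) xi li j) i) \<in> borel_measurable F)"
proof (induction j)
  case 0
  then show ?case by simp
next
  case (Suc j)
  define xx where "xx = (\<lambda>\<omega>. fst (dpd_iter f g X N Bd beta Pmax a (\<lambda>i j. h i j \<omega>) (\<lambda>j. n j \<omega>) xi li j))"
  define ll where "ll = (\<lambda>\<omega>. snd (dpd_iter f g X N Bd beta Pmax a (\<lambda>i j. h i j \<omega>) (\<lambda>j. n j \<omega>) xi li j))"
  from Suc have xm: "xx \<in> borel_measurable F" and lm: "\<And>i. i \<le> N \<Longrightarrow> (\<lambda>\<omega>. ll \<omega> i) \<in> borel_measurable F"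
    unfolding xx_def ll_def by auto
  have njm: "n j \<in> borel_measurable F" using Suc.prems nm by simp
  have cX: "closest_point X \<in> borel_measurable borel"
    by (rule borel_measurable_continuous_onI, rule continuous_on_closest_point) (use X in auto)
  have cB: "closest_point {0..Bd} \<in> borel_measurable borel"
    by (rule borel_measurable_continuous_onI, rule continuous_on_closest_point) (use Bd in auto)
  have gx: "(\<lambda>\<omega>. g i (xx \<omega>)) \<in> borel_measurable F" if "i \<le> N" for i
    using measurable_compose[OF xm gm[OF that]] by simp
  have fx: "(\<lambda>\<omega>. f i (xx \<omega>)) \<in> borel_measurable F" if "i \<le> N" for i
    using measurable_compose[OF xm fm[OF that]] by simp
  have ym: "(\<lambda>\<omega>. (\<Sum>i\<in>{1..N}. if cmod (h i j \<omega>) ^ 2 \<ge> norm (ll \<omega> i *\<^sub>R g i (xx \<omega>)) ^ 2 / (beta * Pmax)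
        then ll \<omega> i *\<^sub>R g i (xx \<omega>) else 0) + sqrt beta *\<^sub>R n j \<omega>) \<in> borel_measurable F"
    apply (intro borel_measurable_add borel_measurable_sum borel_measurable_scaleR njm borel_measurable_const)
    apply (rule measurable_If)
      apply (intro borel_measurable_scaleR lm gx; simp)
     apply simp
    using lm gx hm by measurable
  have e1: "fst (dpd_iter f g X N Bd beta Pmax a (\<lambda>i j. h i j \<omega>) (\<lambda>j. n j \<omega>) xi li (Suc j)) =
     closest_point X (xx \<omega> - a j *\<^sub>R (g 0 (xx \<omega>) + ((\<Sum>i\<in>{1..N}. if cmod (h i j \<omega>) ^ 2 \<ge> norm (ll \<omega> i *\<^sub>R g i (xx \<omega>)) ^ 2 / (beta * Pmax)
        then ll \<omega> i *\<^sub>R g i (xx \<omega>) else 0) + sqrt beta *\<^sub>R n j \<omega>)))" for \<omega>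
    unfolding xx_def ll_def by (simp only: dpd_iter.simps Let_def sum_part_set fst_conv)
  have e2: "snd (dpd_iter f g X N Bd beta Pmax a (\<lambda>i j. h i j \<omega>) (\<lambda>j. n j \<omega>) xi li (Suc j)) i =
     closest_point {0..Bd} (ll \<omega> i + a j * f i (xx \<omega>))" for \<omega> i
    by (simp add: xx_def ll_def Let_def)
  show ?case
  proof
    show "(\<lambda>\<omega>. fst (dpd_iter f g X N Bd beta Pmax a (\<lambda>i j. h i j \<omega>) (\<lambda>j. n j \<omega>) xi li (Suc j))) \<in> borel_measurable F"
      unfolding e1
      apply (rule measurable_compose[OF _ cX])
      apply (rule borel_measurable_diff[OF xm])
      apply (rule borel_measurable_scaleR[OF borel_measurable_const])
      apply (rule borel_measurable_add[OF gx ym])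
      by simp
    show "\<forall>i\<le>N. (\<lambda>\<omega>. snd (dpd_iter f g X N Bd beta Pmax a (\<lambda>i j. h i j \<omega>) (\<lambda>j. n j \<omega>) xi li (Suc j)) i) \<in> borel_measurable F"
      unfolding e2
      by (auto intro!: measurable_compose[OF _ cB] borel_measurable_add borel_measurable_times borel_measurable_const lm fx)
  qed
qed


lemma vec_nth_meas: "(\<lambda>v::real^'d. v $ c) \<in> borel_measurable borel" by measurable

lemma indep_inner_zero:
  fixes n Y :: "'w \<Rightarrow> real^'d" and F :: "'w measure"
  assumes P: "prob_space M"
    and ind: "prob_space.indep_set M {n -` B \<inter> space M | B. B \<in> sets borel} (sets F)"
    and spF: "space F = space M"
    and Ym: "Y \<in> borel_measurable F"
    and YM: "Y \<in> borel_measurable M"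
    and Yb: "\<And>\<omega>. \<omega> \<in> space M \<Longrightarrow> norm (Y \<omega>) \<le> C"
    and ni: "integrable M n"
    and n0: "(\<integral>\<omega>. n \<omega> \<partial>M) = 0"
  shows "(\<integral>\<omega>. inner (Y \<omega>) (n \<omega>) \<partial>M) = 0"
proof -
  interpret prob_space M by (rule P)
  have Yi: "integrable M Y"
    by (rule integrable_const_bound[where B=C]) (use Yb YM in auto)
  have comp: "(\<integral>\<omega>. n \<omega> $ c * Y \<omega> $ c \<partial>M) = 0" for c
  proof -
    have vm: "(\<lambda>v::real^'d. v $ c) \<in> borel_measurable borel" by measurable
    have iv: "indep_var borel (\<lambda>\<omega>. n \<omega> $ c) borel (\<lambda>\<omega>. Y \<omega> $ c)"
      unfolding indep_var_def indep_vars_def2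
    proof
      show "\<forall>i\<in>UNIV. random_variable (case_bool borel borel i) (case_bool (\<lambda>\<omega>. n \<omega> $ c) (\<lambda>\<omega>. Y \<omega> $ c) i)"
      proof -
        have "(\<lambda>\<omega>. n \<omega> $ c) \<in> borel_measurable M" using measurable_compose[OF borel_measurable_integrable[OF ni] vm] by simp
        moreover have "(\<lambda>\<omega>. Y \<omega> $ c) \<in> borel_measurable M" using measurable_compose[OF YM vm] by simp
        ultimately show ?thesis by (auto split: bool.split)
      qed
      show "indep_sets (\<lambda>i. {case_bool (\<lambda>\<omega>. n \<omega> $ c) (\<lambda>\<omega>. Y \<omega> $ c) i -` A \<inter> space M |A. A \<in> sets (case_bool borel borel i)}) UNIV"
      proof (rule indep_sets_mono_sets[OF ind[unfolded indep_set_def]])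
        fix i :: bool
        show "{case_bool (\<lambda>\<omega>. n \<omega> $ c) (\<lambda>\<omega>. Y \<omega> $ c) i -` A \<inter> space M |A. A \<in> sets (case_bool borel borel i)}
              \<subseteq> case_bool {n -` B \<inter> space M |B. B \<in> sets borel} (sets F) i"
        proof (cases i)
          case True
          have "\<exists>B. (\<lambda>\<omega>. n \<omega> $ c) -` A \<inter> space M = n -` B \<inter> space M \<and> B \<in> sets borel"
            if "A \<in> sets borel" for A :: "real set"
          proof (intro exI conjI)
            show "(\<lambda>\<omega>. n \<omega> $ c) -` A \<inter> space M = n -` ((\<lambda>v. v $ c) -` A) \<inter> space M" by auto
            from vm show "(\<lambda>v. v $ c) -` A \<in> sets borel"
              using measurable_sets[of "(\<lambda>v::real^'d. v $ c)" borel borel A] that by simp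
          qed
          then show ?thesis using True by auto
        next
          case False
          have "(\<lambda>\<omega>. Y \<omega> $ c) \<in> borel_measurable F" using measurable_compose[OF Ym vm] by simp
          then have "(\<lambda>\<omega>. Y \<omega> $ c) -` A \<inter> space M \<in> sets F" if "A \<in> sets borel" for A :: "real set"
            using measurable_sets[OF _ that] spF by metis
          then show ?thesis using False by auto
        qed
      qed
    qed
    have "(\<integral>\<omega>. n \<omega> $ c * Y \<omega> $ c \<partial>M) = (\<integral>\<omega>. n \<omega> $ c \<partial>M) * (\<integral>\<omega>. Y \<omega> $ c \<partial>M)"
      by (rule indep_var_lebesgue_integral[OF iv])
         (auto intro!: integrable_bounded_linear[OF bounded_linear_vec_nth] ni Yi)
    also have "(\<integral>\<omega>. n \<omega> $ c \<partial>M) = 0"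
      using integral_bounded_linear[OF bounded_linear_vec_nth ni, of c] n0 by simp
    finally show ?thesis by simp
  qed
  have "(\<integral>\<omega>. inner (Y \<omega>) (n \<omega>) \<partial>M) = (\<integral>\<omega>. (\<Sum>c\<in>UNIV. n \<omega> $ c * Y \<omega> $ c) \<partial>M)"
    by (simp add: inner_vec_def mult.commute)
  also have "\<dots> = (\<Sum>c\<in>UNIV. (\<integral>\<omega>. n \<omega> $ c * Y \<omega> $ c \<partial>M))"
  proof (rule Bochner_Integration.integral_sum[where f="\<lambda>c \<omega>. n \<omega> $ c * Y \<omega> $ c"])
    fix c :: 'd
    have iv2: "(\<lambda>\<omega>. n \<omega> $ c * Y \<omega> $ c) = (\<lambda>\<omega>. Y \<omega> $ c * n \<omega> $ c)" by (simp add: mult.commute)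
    show "integrable M (\<lambda>\<omega>. n \<omega> $ c * Y \<omega> $ c)"
      unfolding iv2
      apply (rule Bochner_Integration.integrable_bound[where f="\<lambda>\<omega>. C * norm (n \<omega>)"])
        apply (intro integrable_mult_right integrable_norm ni)
      subgoal
        apply (rule borel_measurable_times)
        using measurable_compose[OF YM, of "\<lambda>v. v $ c" borel] measurable_compose[OF borel_measurable_integrable[OF ni], of "\<lambda>v. v $ c" borel]
        by (auto simp: vec_nth_meas)
      apply (rule AE_I2)
    proof -
      fix \<omega> assume w: "\<omega> \<in> space M"
      have a1: "\<bar>Y \<omega> $ c\<bar> \<le> C" using component_le_norm_cart[of "Y \<omega>" c] Yb[OF w] by simp
      have a2: "\<bar>n \<omega> $ c\<bar> \<le> norm (n \<omega>)" using component_le_norm_cart[of "n \<omega>" c] by simp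
      show "norm (Y \<omega> $ c * n \<omega> $ c) \<le> norm (C * norm (n \<omega>))"
      proof -
        have C0: "0 \<le> C" using a1 by linarith
        show ?thesis using mult_mono[OF a1 a2] C0 by (simp add: abs_mult)
      qed
    qed
  qed
  also have "\<dots> = 0" using comp by simp
  finally show ?thesis .
qed
lemma integrable_inner_bnd:
  fixes n Y :: "'w \<Rightarrow> real^'d"
  assumes YM: "Y \<in> borel_measurable M"
    and Yb: "\<And>\<omega>. \<omega> \<in> space M \<Longrightarrow> norm (Y \<omega>) \<le> C"
    and ni: "integrable M n"
  shows "integrable M (\<lambda>\<omega>. inner (Y \<omega>) (n \<omega>))"
proof (rule Bochner_Integration.integrable_bound[where f="\<lambda>\<omega>. C * norm (n \<omega>)"])
  show "integrable M (\<lambda>\<omega>. C * norm (n \<omega>))" by (intro integrable_mult_right integrable_norm ni)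
  show "(\<lambda>\<omega>. inner (Y \<omega>) (n \<omega>)) \<in> borel_measurable M"
    using YM borel_measurable_integrable[OF ni] by (rule borel_measurable_inner)
  show "AE \<omega> in M. norm (inner (Y \<omega>) (n \<omega>)) \<le> norm (C * norm (n \<omega>))"
  proof (rule AE_I2)
    fix \<omega> assume w: "\<omega> \<in> space M"
    have "\<bar>inner (Y \<omega>) (n \<omega>)\<bar> \<le> norm (Y \<omega>) * norm (n \<omega>)" by (rule Cauchy_Schwarz_ineq2)
    also have "\<dots> \<le> C * norm (n \<omega>)" using Yb[OF w] by (intro mult_right_mono) auto
    finally show "norm (inner (Y \<omega>) (n \<omega>)) \<le> norm (C * norm (n \<omega>))" by simp
  qed
qed



lemma sq_aux:
  fixes d e t R :: real
  assumes "0 \<le> d" "d \<le> R" "d \<le> e + t" "0 \<le> t" "0 \<le> e"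
  shows "d\<^sup>2 \<le> e\<^sup>2 + 2 * t * R"
proof (cases "e \<ge> R")
  case True
  then show ?thesis using assms by (smt (verit) mult_nonneg_nonneg power_mono)
next
  case False
  show ?thesis
  proof (cases "e + t \<le> R")
    case True
    have "d\<^sup>2 \<le> (e + t)\<^sup>2" using assms by (intro power_mono) auto
    also have "\<dots> = e\<^sup>2 + t * (2 * e + t)" by (simp add: power2_eq_square algebra_simps)
    also have "\<dots> \<le> e\<^sup>2 + t * (2 * R)" using True assms by (intro add_left_mono mult_left_mono) auto
    finally show ?thesis by simp
  next
    case F2: False
    have "d\<^sup>2 \<le> R\<^sup>2" using assms by (intro power_mono) auto
    also have "R\<^sup>2 = e\<^sup>2 + (R - e) * (R + e)" by (simp add: power2_eq_square algebra_simps)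
    also have "(R - e) * (R + e) \<le> t * (2 * R)" using False F2 assms by (intro mult_mono) auto
    finally show ?thesis by simp
  qed
qed

lemma step_ineq:
  fixes x xs nv Lx S :: "real^'d"
  assumes X: "closed X" "convex X" "X \<noteq> {}" and xs: "xs \<in> X"
    and x': "x' = closest_point X (x - a *\<^sub>R (Lx - S + sqrt beta *\<^sub>R nv))"
    and R: "norm (x' - xs) \<le> R" and S: "norm S \<le> t0" and a: "a \<ge> 0" and beta: "beta > 0"
  shows "(norm (x' - xs))\<^sup>2 \<le> (norm (x - xs))\<^sup>2 - 2 * a * inner Lx (x - xs) + a\<^sup>2 * (norm Lx)\<^sup>2
          + a\<^sup>2 * beta * (norm nv)\<^sup>2 + 2 * a * sqrt beta * inner (a *\<^sub>R Lx - (x - xs)) nv + 2 * (a * t0) * R"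
proof -
  define w where "w = x - a *\<^sub>R (Lx + sqrt beta *\<^sub>R nv)"
  have z: "x - a *\<^sub>R (Lx - S + sqrt beta *\<^sub>R nv) = w + a *\<^sub>R S"
    by (simp add: w_def algebra_simps)
  have l1: "norm (x' - closest_point X w) \<le> a * norm S"
    using closest_point_lipschitz[OF X(2,1,3), of "w + a *\<^sub>R S" w] unfolding x' z dist_norm
    using a by simp
  have l2: "norm (closest_point X w - xs) \<le> norm (w - xs)"
    using closest_point_lipschitz[OF X(2,1,3), of w xs] closest_point_self[OF xs] unfolding dist_norm
    by simp
  have d1: "norm (x' - xs) \<le> norm (closest_point X w - xs) + a * t0"
  proof -
    have "norm (x' - xs) \<le> norm (x' - closest_point X w) + norm (closest_point X w - xs)"
      using norm_triangle_ineq[of "x' - closest_point X w" "closest_point X w - xs"] by simp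
    also have "a * norm S \<le> a * t0" using S a by (intro mult_left_mono) auto
    ultimately show ?thesis using l1 by linarith
  qed
  have t0: "0 \<le> a * t0" using S a by (meson dual_order.trans mult_nonneg_nonneg norm_ge_zero)
  have "(norm (x' - xs))\<^sup>2 \<le> (norm (closest_point X w - xs))\<^sup>2 + 2 * (a * t0) * R"
    by (rule sq_aux) (use R d1 t0 in auto)
  also have "(norm (closest_point X w - xs))\<^sup>2 \<le> (norm (w - xs))\<^sup>2"
    using l2 by (intro power_mono) auto
  also have "(norm (w - xs))\<^sup>2 = (norm (x - xs))\<^sup>2 - 2 * a * inner Lx (x - xs) + a\<^sup>2 * (norm Lx)\<^sup>2
          + a\<^sup>2 * beta * (norm nv)\<^sup>2 + 2 * a * sqrt beta * inner (a *\<^sub>R Lx - (x - xs)) nv"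
  proof -
    have sb: "sqrt beta * sqrt beta = beta" using beta by simp
    have e: "w - xs = (x - xs) - a *\<^sub>R Lx - (a * sqrt beta) *\<^sub>R nv" by (simp add: w_def algebra_simps)
    have "(norm (w - xs))\<^sup>2 = inner ((x - xs) - a *\<^sub>R Lx - (a * sqrt beta) *\<^sub>R nv) ((x - xs) - a *\<^sub>R Lx - (a * sqrt beta) *\<^sub>R nv)"
      by (simp only: e power2_norm_eq_inner)
    also have "\<dots> = inner (x - xs) (x - xs) - 2 * a * inner Lx (x - xs) + a\<^sup>2 * inner Lx Lx
          + a\<^sup>2 * (sqrt beta * sqrt beta) * inner nv nv + 2 * a * sqrt beta * (a * inner Lx nv - inner (x - xs) nv)"
      by (simp add: inner_diff_left inner_diff_right inner_commute power2_eq_square algebra_simps)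
    finally show ?thesis unfolding sb
      by (simp add: power2_norm_eq_inner inner_diff_left)
  qed
  finally show ?thesis by simp
qed

lemma lagr_sub:
  fixes f :: "nat \<Rightarrow> real^'d \<Rightarrow> real"
  assumes g_sub: "\<And>i x. i \<le> N \<Longrightarrow> is_subgradient (f i) x (g i x)"
    and lam: "\<And>i. i \<in> {1..N} \<Longrightarrow> lam i \<ge> 0"
  shows "lagr f N x lam - lagr f N xs lam \<le> inner (g 0 x + (\<Sum>i=1..N. lam i *\<^sub>R g i x)) (x - xs)"
proof -
  have s: "f i xs \<ge> f i x + inner (g i x) (xs - x)" if "i \<le> N" for i
    using g_sub[OF that] unfolding is_subgradient_def by blast
  have "lam i * f i x - lam i * f i xs \<le> lam i * inner (g i x) (x - xs)" if "i \<in> {1..N}" for i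
  proof -
    have h: "f i x - f i xs \<le> inner (g i x) (x - xs)" using s[of i] that
      by (simp add: inner_diff_right)
    show ?thesis using mult_left_mono[OF h lam[OF that]] by (simp add: right_diff_distrib)
  qed
  then have "(\<Sum>i=1..N. lam i * f i x - lam i * f i xs) \<le> (\<Sum>i=1..N. lam i * inner (g i x) (x - xs))"
    by (intro sum_mono) auto
  then have "(\<Sum>i=1..N. lam i * f i x) - (\<Sum>i=1..N. lam i * f i xs) \<le> (\<Sum>i=1..N. lam i * inner (g i x) (x - xs))"
    by (simp add: sum_subtractf)
  moreover have "f 0 x - f 0 xs \<le> inner (g 0 x) (x - xs)" using s[of 0] by (simp add: inner_diff_right)
  ultimately show ?thesis
    by (simp add: lagr_def inner_add_left inner_sum_left)
qed


theorem lemma2: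
  fixes M :: "'w measure"
    and N :: nat
    and f :: "nat \<Rightarrow> real^'d \<Rightarrow> real"
    and g :: "nat \<Rightarrow> real^'d \<Rightarrow> real^'d"
    and X :: "(real^'d) set"
    and xbar :: "real^'d"
    and gam qt r Bd :: real
    and lt :: "nat \<Rightarrow> real"
    and xs :: "real^'d" and ls :: "nat \<Rightarrow> real"
    and x0 :: "real^'d" and l0 :: "nat \<Rightarrow> real"
    and a :: "nat \<Rightarrow> real"
    and beta Pmax sigma :: real
    and h :: "nat \<Rightarrow> nat \<Rightarrow> 'w \<Rightarrow> complex"
    and n :: "nat \<Rightarrow> 'w \<Rightarrow> real^'d"
    and iter :: "'w \<Rightarrow> nat \<Rightarrow> (real^'d) \<times> (nat \<Rightarrow> real)"
    and Abar :: "nat \<Rightarrow> real"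
    and G L R :: real
    and k :: nat
  assumes P: "prob_space M"
    and N_pos: "N \<ge> 1"
    and f_convex: "\<And>i. i \<le> N \<Longrightarrow> convex_on UNIV (f i)"
    and X: "X \<noteq> {}" "compact X" "convex X"
    and g_sub: "\<And>i x. i \<le> N \<Longrightarrow> is_subgradient (f i) x (g i x)"
    and g_meas: "\<And>i. i \<le> N \<Longrightarrow> g i \<in> borel_measurable borel"
    and slater: "xbar \<in> X" "\<And>i. i \<in> {1..N} \<Longrightarrow> f i xbar < 0"
    and gam_def: "gam = Min ((\<lambda>i. - f i xbar) ` {1..N})"
    and lt_nonneg: "\<And>i. i \<in> {1..N} \<Longrightarrow> lt i \<ge> 0"
    and qt_def: "qt = dual_fn f N X lt"
    and r_pos: "r > 0"
    and Bd_def: "Bd = (f 0 xbar - qt) / gam + r"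
    and saddle_mem: "xs \<in> X" "ls \<in> dual_box N Bd"
    and saddle: "\<And>x lam. x \<in> X \<Longrightarrow> lam \<in> dual_box N Bd \<Longrightarrow>
                   lagr f N xs lam \<le> lagr f N xs ls \<and> lagr f N xs ls \<le> lagr f N x ls"
    and saddle_val: "lagr f N xs ls = opt_val f N X"
    and init: "x0 \<in> X" "l0 \<in> dual_box N Bd"
    and step: "\<And>j. 0 < a j \<and> a j < 1"
    and beta_pos: "beta > 0" and Pmax_pos: "Pmax > 0"
    and h_meas: "\<And>i j. h i j \<in> borel_measurable M"
    and n_meas: "\<And>j. n j \<in> borel_measurable M"
    and n_int: "\<And>j. integrable M (n j)"
    and n_mean: "\<And>j. (\<integral>\<omega>. n j \<omega> \<partial>M) = 0"
    and n_var_int: "\<And>j. integrable M (\<lambda>\<omega>. (norm (n j \<omega>))\<^sup>2)"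
    and n_var: "\<And>j. (\<integral>\<omega>. (norm (n j \<omega>))\<^sup>2 \<partial>M) = sigma\<^sup>2"
    and n_indep: "\<And>j. prob_space.indep_set M
                    {n j -` B \<inter> space M | B. B \<in> sets borel} (other_rand M h n j)"
    and iter_def: "\<And>\<omega> j. iter \<omega> j =
        dpd_iter f g X N Bd beta Pmax a (\<lambda>i j. h i j \<omega>) (\<lambda>j. n j \<omega>) x0 l0 j"
    and Abar_def: "\<And>j. Abar j = (\<integral>\<omega>. real (card (part_set g N beta Pmax (\<lambda>i. h i j \<omega>)
                                   (fst (iter \<omega> j)) (snd (iter \<omega> j)))) \<partial>M)"
    and GLR_pos: "G > 0" "L > 0" "R > 0" "L > G"
    and bnd_G: "\<And>\<omega> i j. \<omega> \<in> space M \<Longrightarrow> i \<in> {1..N} \<Longrightarrow>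
                  norm (snd (iter \<omega> j) i *\<^sub>R g i (fst (iter \<omega> j))) \<le> G"
    and bnd_Lx: "\<And>\<omega> j. \<omega> \<in> space M \<Longrightarrow>
                  norm (g 0 (fst (iter \<omega> j))
                        + (\<Sum>i=1..N. snd (iter \<omega> j) i *\<^sub>R g i (fst (iter \<omega> j)))) \<le> L"
    and bnd_F: "\<And>\<omega> j. \<omega> \<in> space M \<Longrightarrow>
                  sqrt (\<Sum>i=1..N. (f i (fst (iter \<omega> j)))\<^sup>2) \<le> L"
    and bnd_R: "\<And>\<omega> j. \<omega> \<in> space M \<Longrightarrow> norm (fst (iter \<omega> j) - xs) \<le> R"
    and k_pos: "k \<ge> 1"
  shows "(\<integral>\<omega>. (\<Sum>j<k. a j * lagr f N (fst (iter \<omega> j)) (snd (iter \<omega> j))) / (\<Sum>j<k. a j) \<partial>M)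
           - lagr f N xs ls
         \<le> (1 / (\<Sum>j<k. a j)) *
            (R * G * (\<Sum>j<k. (real N - Abar j) * a j)
             + (beta * sigma\<^sup>2 + L\<^sup>2) * (\<Sum>j<k. (a j)\<^sup>2)
             + 2 * L * G * (\<Sum>j<k. (real N - Abar j) * (a j)\<^sup>2)
             + (\<integral>\<omega>. (norm (x0 - xs))\<^sup>2 \<partial>M)
             + L\<^sup>2 * (\<Sum>j<k. (real N - Abar j)\<^sup>2 * (a j)\<^sup>2))"
proof -
  interpret prob_space M by (rule P)
  define xx where "xx j \<omega> = fst (iter \<omega> j)" for j \<omega>
  define ll where "ll j \<omega> = snd (iter \<omega> j)" for j \<omega>
  define Lg where "Lg j \<omega> = lagr f N (xx j \<omega>) (ll j \<omega>)" for j \<omega>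
  define Lxv where "Lxv j \<omega> = g 0 (xx j \<omega>) + (\<Sum>i=1..N. ll j \<omega> i *\<^sub>R g i (xx j \<omega>))" for j \<omega>
  define Aset where "Aset j \<omega> = part_set g N beta Pmax (\<lambda>i. h i j \<omega>) (xx j \<omega>) (ll j \<omega>)" for j \<omega>
  define cA where "cA j \<omega> = real (card (Aset j \<omega>))" for j \<omega>
  define dd where "dd j \<omega> = (norm (xx j \<omega> - xs))\<^sup>2" for j \<omega>
  define SS where "SS j \<omega> = (\<Sum>i\<in>{1..N} - Aset j \<omega>. ll j \<omega> i *\<^sub>R g i (xx j \<omega>))" for j \<omega>
  define W where "W j \<omega> = a j *\<^sub>R Lxv j \<omega> - (xx j \<omega> - xs)" for j \<omega>
  define Ls where "Ls = lagr f N xs ls"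
  define Z where "Z = (\<Sum>j<k. a j)"
  have Xc: "closed X" using X compact_imp_closed by blast
  have Bd0: "Bd \<ge> 0" using init(2) N_pos unfolding dual_box_def by force
  have it0: "iter \<omega> 0 = (x0, l0)" for \<omega> by (simp add: iter_def)
  have itS: "iter \<omega> (Suc j) = (closest_point X (xx j \<omega> - a j *\<^sub>R (g 0 (xx j \<omega>) + ((\<Sum>i\<in>Aset j \<omega>. ll j \<omega> i *\<^sub>R g i (xx j \<omega>)) + sqrt beta *\<^sub>R n j \<omega>))),
          \<lambda>i. closest_point {0..Bd} (ll j \<omega> i + a j * f i (xx j \<omega>)))" for j \<omega>
    unfolding xx_def ll_def Aset_def iter_def by (simp add: Let_def)
  have ll_box: "ll j \<omega> \<in> dual_box N Bd" for j \<omega>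
  proof (cases j)
    case 0 then show ?thesis using init(2) by (simp add: ll_def it0)
  next
    case (Suc j')
    have "closest_point {0..Bd} y \<in> {0..Bd}" for y :: real
      by (rule closest_point_in_set) (use Bd0 in auto)
    then show ?thesis unfolding Suc by (auto simp: ll_def[of "Suc j'"] itS dual_box_def)
  qed
  have ll_nn: "i \<in> {1..N} \<Longrightarrow> ll j \<omega> i \<ge> 0" for i j \<omega> using ll_box unfolding dual_box_def by blast
  have Aset_sub: "Aset j \<omega> \<subseteq> {1..N}" for j \<omega> unfolding Aset_def part_set_def by auto
  have cA_le: "cA j \<omega> \<le> real N" for j \<omega>
    unfolding cA_def using card_mono[OF _ Aset_sub[of j \<omega>]] by simp
  have cA_nn: "cA j \<omega> \<ge> 0" for j \<omega> unfolding cA_def by simp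
  have xxS: "xx (Suc j) \<omega> = closest_point X (xx j \<omega> - a j *\<^sub>R (Lxv j \<omega> - SS j \<omega> + sqrt beta *\<^sub>R n j \<omega>))" for j \<omega>
  proof -
    have "(\<Sum>i=1..N. ll j \<omega> i *\<^sub>R g i (xx j \<omega>)) = SS j \<omega> + (\<Sum>i\<in>Aset j \<omega>. ll j \<omega> i *\<^sub>R g i (xx j \<omega>))"
      unfolding SS_def by (rule sum.subset_diff[OF Aset_sub]) simp
    then show ?thesis
      by (simp add: xx_def[of "Suc j"] itS Lxv_def algebra_simps)
  qed
  have SS_bnd: "\<omega> \<in> space M \<Longrightarrow> norm (SS j \<omega>) \<le> (real N - cA j \<omega>) * G" for j \<omega>
  proof -
    assume w: "\<omega> \<in> space M"
    have "norm (SS j \<omega>) \<le> (\<Sum>i\<in>{1..N} - Aset j \<omega>. norm (ll j \<omega> i *\<^sub>R g i (xx j \<omega>)))"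
      unfolding SS_def by (rule norm_sum)
    also have "\<dots> \<le> (\<Sum>i\<in>{1..N} - Aset j \<omega>. G)"
      by (rule sum_mono) (use bnd_G[OF w] in \<open>auto simp: xx_def ll_def\<close>)
    also have "\<dots> = real (card ({1..N} - Aset j \<omega>)) * G" by simp
    also have "real (card ({1..N} - Aset j \<omega>)) = real N - cA j \<omega>"
      unfolding cA_def using card_Diff_subset[OF _ Aset_sub[of j \<omega>]] card_mono[OF _ Aset_sub[of j \<omega>]]
      by (simp add: finite_subset[OF Aset_sub] of_nat_diff)
    finally show ?thesis .
  qed
  have fm: "f i \<in> borel_measurable borel" if "i \<le> N" for i
    by (rule borel_measurable_continuous_onI, rule convex_on_continuous) (use f_convex[OF that] in auto)
  have measM: "xx j \<in> borel_measurable M \<and> (\<forall>i\<le>N. (\<lambda>\<omega>. ll j \<omega> i) \<in> borel_measurable M)" for j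
    using iter_meas[OF X(1) Xc X(3) Bd0 g_meas fm h_meas n_meas, where K="Suc j" and j=j and a=a and xi=x0 and li=l0 and beta=beta and Pmax=Pmax]
    unfolding xx_def ll_def iter_def by simp
  define Gen where "Gen j = ((\<Union>i j'. {h i j' -` B \<inter> space M | B. B \<in> sets borel})
      \<union> (\<Union>j'\<in>-{j}. {n j' -` B \<inter> space M | B. B \<in> sets borel}))" for j
  define Fj where "Fj j = measure_of (space M) (Gen j) (\<lambda>_. 0)" for j
  have GenP: "Gen j \<subseteq> Pow (space M)" for j unfolding Gen_def by auto
  have setsF: "sets (Fj j) = other_rand M h n j" for j
    unfolding Fj_def other_rand_def Gen_def[symmetric] using sets_measure_of[OF GenP] by simp
  have spF: "space (Fj j) = space M" for j
    unfolding Fj_def using space_measure_of[OF GenP] by simp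
  have hF: "h i j' \<in> borel_measurable (Fj j)" for i j' j
  proof (rule measurableI)
    fix B :: "complex set" assume "B \<in> sets borel"
    then have "h i j' -` B \<inter> space M \<in> {h i j' -` B \<inter> space M | B. B \<in> sets borel}" by blast
    then have "h i j' -` B \<inter> space M \<in> Gen j" unfolding Gen_def by (intro UnI1 UN_I[OF UNIV_I] UN_I[OF UNIV_I])
    then show "h i j' -` B \<inter> space (Fj j) \<in> sets (Fj j)"
      unfolding spF unfolding Fj_def sets_measure_of[OF GenP] by (rule sigma_sets.Basic)
  qed simp
  have nF: "n j' \<in> borel_measurable (Fj j)" if "j' < j" for j' j
  proof (rule measurableI)
    fix B :: "(real^'d) set" assume "B \<in> sets borel"
    then have "n j' -` B \<inter> space M \<in> {n j' -` B \<inter> space M | B. B \<in> sets borel}" by blast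
    moreover have "j' \<in> -{j}" using that by simp
    ultimately have "n j' -` B \<inter> space M \<in> Gen j" unfolding Gen_def by (intro UnI2 UN_I)
    then show "n j' -` B \<inter> space (Fj j) \<in> sets (Fj j)"
      unfolding spF unfolding Fj_def sets_measure_of[OF GenP] by (rule sigma_sets.Basic)
  qed simp
  have measF: "xx j \<in> borel_measurable (Fj j) \<and> (\<forall>i\<le>N. (\<lambda>\<omega>. ll j \<omega> i) \<in> borel_measurable (Fj j))" for j
    using iter_meas[OF X(1) Xc X(3) Bd0 g_meas fm hF nF, where K=j and j=j and a=a and xi=x0 and li=l0 and beta=beta and Pmax=Pmax]
    unfolding xx_def ll_def iter_def by simp
  have xxM: "xx j \<in> borel_measurable M" for j using measM by blast
  have llM: "i \<le> N \<Longrightarrow> (\<lambda>\<omega>. ll j \<omega> i) \<in> borel_measurable M" for i j using measM by blast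
  have xxF: "xx j \<in> borel_measurable (Fj j)" for j using measF by blast
  have llF: "i \<le> N \<Longrightarrow> (\<lambda>\<omega>. ll j \<omega> i) \<in> borel_measurable (Fj j)" for i j using measF by blast
  have gxM: "i \<le> N \<Longrightarrow> (\<lambda>\<omega>. g i (xx j \<omega>)) \<in> borel_measurable M" for i j
    using measurable_compose[OF xxM g_meas] by simp
  have gxF: "i \<le> N \<Longrightarrow> (\<lambda>\<omega>. g i (xx j \<omega>)) \<in> borel_measurable (Fj j)" for i j
    using measurable_compose[OF xxF g_meas] by simp
  have fxM: "i \<le> N \<Longrightarrow> (\<lambda>\<omega>. f i (xx j \<omega>)) \<in> borel_measurable M" for i j
    using measurable_compose[OF xxM fm] by simp
  have LxvM: "Lxv j \<in> borel_measurable M" for j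
    unfolding Lxv_def by (intro borel_measurable_add borel_measurable_sum borel_measurable_scaleR gxM llM) auto
  have LxvF: "Lxv j \<in> borel_measurable (Fj j)" for j
    unfolding Lxv_def by (intro borel_measurable_add borel_measurable_sum borel_measurable_scaleR gxF llF) auto
  have WM: "W j \<in> borel_measurable M" for j
    unfolding W_def by (intro borel_measurable_diff borel_measurable_scaleR borel_measurable_const LxvM xxM)
  have WF: "W j \<in> borel_measurable (Fj j)" for j
    unfolding W_def by (intro borel_measurable_diff borel_measurable_scaleR borel_measurable_const LxvF xxF)
  have LgM: "Lg j \<in> borel_measurable M" for j
    unfolding Lg_def lagr_def by (intro borel_measurable_add borel_measurable_sum borel_measurable_times fxM llM) auto
  have ddM: "dd j \<in> borel_measurable M" for j
    unfolding dd_def using borel_measurable_diff[OF xxM borel_measurable_const] by measurable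
  have cAM: "cA j \<in> borel_measurable M" for j
  proof -
    have e: "cA j \<omega> = (\<Sum>i\<in>{1..N}. if cmod (h i j \<omega>) ^ 2 \<ge> norm (ll j \<omega> i *\<^sub>R g i (xx j \<omega>)) ^ 2 / (beta * Pmax) then 1 else 0)" for \<omega>
      unfolding cA_def Aset_def card_eq_sum sum_part_set by (simp add: of_nat_sum if_distrib cong: if_cong)
    have [measurable]: "i \<le> N \<Longrightarrow> (\<lambda>\<omega>. ll j \<omega> i *\<^sub>R g i (xx j \<omega>)) \<in> borel_measurable M" for i
      by (intro borel_measurable_scaleR llM gxM)
    show ?thesis unfolding e using h_meas by measurable
  qed
  have dd_bnd: "\<omega> \<in> space M \<Longrightarrow> dd j \<omega> \<le> R\<^sup>2" for j \<omega>
    unfolding dd_def using bnd_R[of \<omega> j] by (intro power_mono) (auto simp: xx_def)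
  have dd_nn: "dd j \<omega> \<ge> 0" for j \<omega> unfolding dd_def by simp
  have Lxv_bnd: "\<omega> \<in> space M \<Longrightarrow> norm (Lxv j \<omega>) \<le> L" for j \<omega>
    using bnd_Lx unfolding Lxv_def xx_def ll_def by blast
  have W_bnd: "\<omega> \<in> space M \<Longrightarrow> norm (W j \<omega>) \<le> a j * L + R" for j \<omega>
  proof -
    assume w: "\<omega> \<in> space M"
    have "norm (W j \<omega>) \<le> norm (a j *\<^sub>R Lxv j \<omega>) + norm (xx j \<omega> - xs)"
      unfolding W_def by (rule norm_triangle_ineq4)
    also have "norm (a j *\<^sub>R Lxv j \<omega>) \<le> a j * L"
      using Lxv_bnd[OF w, of j] step[of j] by (simp add: mult_left_mono)
    finally show ?thesis using bnd_R[OF w, of j] unfolding xx_def by linarith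
  qed
  have Ls_ge: "lagr f N xs (ll j \<omega>) \<le> Ls" for j \<omega>
    using saddle[OF saddle_mem(1) ll_box[of j \<omega>]] unfolding Ls_def by blast
  have Lg_up: "\<omega> \<in> space M \<Longrightarrow> Lg j \<omega> - Ls \<le> inner (Lxv j \<omega>) (xx j \<omega> - xs)" for j \<omega>
    using lagr_sub[where lam="ll j \<omega>" and x="xx j \<omega>" and xs=xs and N=N and f=f and g=g, OF g_sub ll_nn] Ls_ge[of j \<omega>]
    unfolding Lg_def Lxv_def by linarith
  have pstep: "2 * a j * (Lg j \<omega> - Ls) \<le> dd j \<omega> - dd (Suc j) \<omega> + (a j)\<^sup>2 * L\<^sup>2 + (a j)\<^sup>2 * beta * (norm (n j \<omega>))\<^sup>2
      + 2 * a j * sqrt beta * inner (W j \<omega>) (n j \<omega>) + 2 * a j * G * R * (real N - cA j \<omega>)"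
    if w: "\<omega> \<in> space M" for j \<omega>
  proof -
    have aj: "a j \<ge> 0" using step[of j] by simp
    have si: "dd (Suc j) \<omega> \<le> dd j \<omega> - 2 * a j * inner (Lxv j \<omega>) (xx j \<omega> - xs) + (a j)\<^sup>2 * (norm (Lxv j \<omega>))\<^sup>2
          + (a j)\<^sup>2 * beta * (norm (n j \<omega>))\<^sup>2 + 2 * a j * sqrt beta * inner (W j \<omega>) (n j \<omega>) + 2 * (a j * ((real N - cA j \<omega>) * G)) * R"
      unfolding dd_def W_def
      by (rule step_ineq[OF Xc X(3) X(1) saddle_mem(1) xxS]) (use bnd_R[OF w, of "Suc j"] SS_bnd[OF w, of j] aj beta_pos in \<open>auto simp: xx_def\<close>)
    have i1: "2 * a j * (Lg j \<omega> - Ls) \<le> 2 * a j * inner (Lxv j \<omega>) (xx j \<omega> - xs)"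
      using Lg_up[OF w, of j] aj by (simp add: mult_left_mono)
    have i2: "(a j)\<^sup>2 * (norm (Lxv j \<omega>))\<^sup>2 \<le> (a j)\<^sup>2 * L\<^sup>2"
      using Lxv_bnd[OF w, of j] by (intro mult_left_mono power_mono) auto
    have i3: "2 * (a j * ((real N - cA j \<omega>) * G)) * R = 2 * a j * G * R * (real N - cA j \<omega>)" by simp
    show ?thesis using si i1 i2 i3 by linarith
  qed
  define Kg where "Kg = norm (g 0 xs) + (\<Sum>i=1..N. Bd * norm (g i xs))"
  define Kf where "Kf = \<bar>f 0 xs\<bar> + (\<Sum>i=1..N. Bd * \<bar>f i xs\<bar>)"
  have ll_le: "i \<in> {1..N} \<Longrightarrow> ll j \<omega> i \<le> Bd" for i j \<omega> using ll_box unfolding dual_box_def by blast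
  have Kg0: "Kg \<ge> 0" unfolding Kg_def using Bd0 by (intro add_nonneg_nonneg sum_nonneg) auto
  have Lg_bnd: "\<omega> \<in> space M \<Longrightarrow> \<bar>Lg j \<omega>\<bar> \<le> \<bar>Ls\<bar> + L * R + Kf + Kg * R" for j \<omega>
  proof -
    assume w: "\<omega> \<in> space M"
    have up: "Lg j \<omega> \<le> Ls + L * R"
    proof -
      have "inner (Lxv j \<omega>) (xx j \<omega> - xs) \<le> norm (Lxv j \<omega>) * norm (xx j \<omega> - xs)"
        by (rule norm_cauchy_schwarz)
      also have "\<dots> \<le> L * R" using Lxv_bnd[OF w, of j] bnd_R[OF w, of j]
        by (intro mult_mono) (use GLR_pos in \<open>auto simp: xx_def\<close>)
      finally show ?thesis using Lg_up[OF w, of j] by linarith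
    qed
    define Lx0 where "Lx0 = g 0 xs + (\<Sum>i=1..N. ll j \<omega> i *\<^sub>R g i xs)"
    have lo1: "lagr f N xs (ll j \<omega>) - Lg j \<omega> \<le> inner Lx0 (xs - xx j \<omega>)"
      using lagr_sub[where lam="ll j \<omega>" and x=xs and xs="xx j \<omega>" and N=N and f=f and g=g, OF g_sub ll_nn]
      unfolding Lg_def Lx0_def by simp
    have "norm Lx0 \<le> norm (g 0 xs) + norm (\<Sum>i=1..N. ll j \<omega> i *\<^sub>R g i xs)"
      unfolding Lx0_def by (rule norm_triangle_ineq)
    also have "norm (\<Sum>i=1..N. ll j \<omega> i *\<^sub>R g i xs) \<le> (\<Sum>i=1..N. norm (ll j \<omega> i *\<^sub>R g i xs))"
      by (rule norm_sum)
    also have "\<dots> \<le> (\<Sum>i=1..N. Bd * norm (g i xs))"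
      by (rule sum_mono) (use ll_nn ll_le in \<open>auto intro!: mult_right_mono\<close>)
    finally have nL: "norm Lx0 \<le> Kg" unfolding Kg_def by simp
    have "inner Lx0 (xs - xx j \<omega>) \<le> norm Lx0 * norm (xs - xx j \<omega>)" by (rule norm_cauchy_schwarz)
    also have "\<dots> \<le> Kg * R" using nL bnd_R[OF w, of j]
      by (intro mult_mono) (use Kg0 in \<open>auto simp: xx_def norm_minus_commute\<close>)
    finally have lo2: "inner Lx0 (xs - xx j \<omega>) \<le> Kg * R" .
    have "- (\<Sum>i=1..N. Bd * \<bar>f i xs\<bar>) \<le> (\<Sum>i=1..N. ll j \<omega> i * f i xs)"
    proof -
      have "(\<Sum>i=1..N. - (Bd * \<bar>f i xs\<bar>)) \<le> (\<Sum>i=1..N. ll j \<omega> i * f i xs)"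
      proof (rule sum_mono)
        fix i assume i: "i \<in> {1..N}"
        have "\<bar>ll j \<omega> i * f i xs\<bar> \<le> Bd * \<bar>f i xs\<bar>"
          using ll_nn[OF i] ll_le[OF i] by (simp add: abs_mult mult_right_mono)
        then show "- (Bd * \<bar>f i xs\<bar>) \<le> ll j \<omega> i * f i xs" by linarith
      qed
      then show ?thesis by (simp add: sum_negf)
    qed
    then have lo3: "lagr f N xs (ll j \<omega>) \<ge> - Kf" unfolding lagr_def Kf_def by linarith
    have "0 \<le> Kg * R" "0 \<le> L * R" using Kg0 GLR_pos by auto
    moreover have "Kf \<ge> 0" unfolding Kf_def using Bd0 by (intro add_nonneg_nonneg sum_nonneg) auto
    ultimately show ?thesis using up lo1 lo2 lo3 by linarith
  qed
  have intLg: "integrable M (Lg j)" for j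
    by (rule integrable_const_bound[where B="\<bar>Ls\<bar> + L * R + Kf + Kg * R"]) (use Lg_bnd LgM in auto)
  have intdd: "integrable M (dd j)" for j
    by (rule integrable_const_bound[where B="R\<^sup>2"]) (use dd_bnd dd_nn ddM in auto)
  have intcA: "integrable M (cA j)" for j
    by (rule integrable_const_bound[where B="real N"]) (use cA_le cA_nn cAM in auto)
  have intWn: "integrable M (\<lambda>\<omega>. inner (W j \<omega>) (n j \<omega>))" for j
    by (rule integrable_inner_bnd[OF WM W_bnd n_int])
  have zeroWn: "(\<integral>\<omega>. inner (W j \<omega>) (n j \<omega>) \<partial>M) = 0" for j
    by (rule indep_inner_zero[OF P _ spF WF WM W_bnd n_int n_mean]) (use n_indep[of j] setsF[of j] in simp)
  have AbarE: "Abar j = (\<integral>\<omega>. cA j \<omega> \<partial>M)" for j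
    unfolding Abar_def cA_def Aset_def xx_def ll_def by simp
  have estep: "2 * a j * ((\<integral>\<omega>. Lg j \<omega> \<partial>M) - Ls) \<le> (\<integral>\<omega>. dd j \<omega> \<partial>M) - (\<integral>\<omega>. dd (Suc j) \<omega> \<partial>M)
      + (a j)\<^sup>2 * L\<^sup>2 + (a j)\<^sup>2 * beta * sigma\<^sup>2 + 2 * a j * G * R * (real N - Abar j)" for j
  proof -
    have "(\<integral>\<omega>. 2 * a j * (Lg j \<omega> - Ls) \<partial>M) \<le> (\<integral>\<omega>. dd j \<omega> - dd (Suc j) \<omega> + (a j)\<^sup>2 * L\<^sup>2 + (a j)\<^sup>2 * beta * (norm (n j \<omega>))\<^sup>2
      + 2 * a j * sqrt beta * inner (W j \<omega>) (n j \<omega>) + 2 * a j * G * R * (real N - cA j \<omega>) \<partial>M)"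
      by (rule integral_mono) (use pstep intLg intdd intcA intWn n_var_int in auto)
    also have "\<dots> = (\<integral>\<omega>. dd j \<omega> \<partial>M) - (\<integral>\<omega>. dd (Suc j) \<omega> \<partial>M)
      + (a j)\<^sup>2 * L\<^sup>2 + (a j)\<^sup>2 * beta * sigma\<^sup>2 + 2 * a j * G * R * (real N - Abar j)"
      using intdd intcA intWn n_var_int zeroWn n_var AbarE by (simp add: algebra_simps prob_space)
    also have "(\<integral>\<omega>. 2 * a j * (Lg j \<omega> - Ls) \<partial>M) = 2 * a j * ((\<integral>\<omega>. Lg j \<omega> \<partial>M) - Ls)"
      using intLg by (simp add: prob_space)
    finally show ?thesis .
  qed
  define D0 where "D0 = (norm (x0 - xs))\<^sup>2"
  have Z_pos: "Z > 0" unfolding Z_def using k_pos step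
    by (intro sum_pos) (auto simp: lessThan_empty_iff)
  have Abar_le: "Abar j \<le> real N" for j
  proof -
    have "(\<integral>\<omega>. cA j \<omega> \<partial>M) \<le> (\<integral>\<omega>. real N \<partial>M)"
      by (rule integral_mono) (use intcA cA_le in auto)
    then show ?thesis using AbarE[of j] by (simp add: prob_space)
  qed
  have Edd0: "(\<integral>\<omega>. dd 0 \<omega> \<partial>M) = D0" unfolding dd_def xx_def D0_def by (simp add: it0 prob_space)
  have ED0: "(\<integral>\<omega>. (norm (x0 - xs))\<^sup>2 \<partial>M) = D0" unfolding D0_def by (simp add: prob_space)
  have Eddk: "(\<integral>\<omega>. dd k \<omega> \<partial>M) \<ge> 0" by (rule integral_nonneg_AE) (use dd_nn in auto)
  define EL where "EL j = (\<integral>\<omega>. Lg j \<omega> \<partial>M)" for j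
  define T where "T = (\<Sum>j<k. a j * (EL j - Ls))"
  have "2 * T = (\<Sum>j<k. 2 * a j * (EL j - Ls))" unfolding T_def by (simp add: sum_distrib_left algebra_simps)
  also have "\<dots> \<le> (\<Sum>j<k. ((\<integral>\<omega>. dd j \<omega> \<partial>M) - (\<integral>\<omega>. dd (Suc j) \<omega> \<partial>M))
      + ((a j)\<^sup>2 * L\<^sup>2 + (a j)\<^sup>2 * beta * sigma\<^sup>2 + 2 * a j * G * R * (real N - Abar j)))"
    by (rule sum_mono) (use estep in \<open>simp add: EL_def algebra_simps\<close>)
  also have "\<dots> = (\<integral>\<omega>. dd 0 \<omega> \<partial>M) - (\<integral>\<omega>. dd k \<omega> \<partial>M)
      + (\<Sum>j<k. (a j)\<^sup>2 * L\<^sup>2 + (a j)\<^sup>2 * beta * sigma\<^sup>2 + 2 * a j * G * R * (real N - Abar j))"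
    using sum_lessThan_telescope'[of "\<lambda>j. integral\<^sup>L M (dd j)" k] by (simp only: sum.distrib)
  finally have T2: "2 * T \<le> D0 + (\<Sum>j<k. (a j)\<^sup>2 * L\<^sup>2 + (a j)\<^sup>2 * beta * sigma\<^sup>2 + 2 * a j * G * R * (real N - Abar j))"
    using Edd0 Eddk by linarith
  have s1: "(\<Sum>j<k. (a j)\<^sup>2 * L\<^sup>2 + (a j)\<^sup>2 * beta * sigma\<^sup>2 + 2 * a j * G * R * (real N - Abar j))
     = (beta * sigma\<^sup>2 + L\<^sup>2) * (\<Sum>j<k. (a j)\<^sup>2) + 2 * (R * G * (\<Sum>j<k. (real N - Abar j) * a j))"
  proof -
    have "(beta * sigma\<^sup>2 + L\<^sup>2) * (\<Sum>j<k. (a j)\<^sup>2) + 2 * (R * G * (\<Sum>j<k. (real N - Abar j) * a j))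
       = (\<Sum>j<k. (beta * sigma\<^sup>2 + L\<^sup>2) * (a j)\<^sup>2 + 2 * (R * G * ((real N - Abar j) * a j)))"
      by (simp add: sum.distrib sum_distrib_left)
    also have "\<dots> = (\<Sum>j<k. (a j)\<^sup>2 * L\<^sup>2 + (a j)\<^sup>2 * beta * sigma\<^sup>2 + 2 * a j * G * R * (real N - Abar j))"
      by (rule sum.cong) (auto simp: algebra_simps)
    finally show ?thesis by simp
  qed
  have n1: "0 \<le> (beta * sigma\<^sup>2 + L\<^sup>2) * (\<Sum>j<k. (a j)\<^sup>2)"
    using beta_pos by (intro mult_nonneg_nonneg sum_nonneg add_nonneg_nonneg) auto
  have n2: "0 \<le> 2 * L * G * (\<Sum>j<k. (real N - Abar j) * (a j)\<^sup>2)"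
    using GLR_pos Abar_le by (intro mult_nonneg_nonneg sum_nonneg) auto
  have n3: "0 \<le> L\<^sup>2 * (\<Sum>j<k. (real N - Abar j)\<^sup>2 * (a j)\<^sup>2)"
    by (intro mult_nonneg_nonneg sum_nonneg) auto
  have D0nn: "D0 \<ge> 0" unfolding D0_def by simp
  have Tb: "T \<le> R * G * (\<Sum>j<k. (real N - Abar j) * a j)
             + (beta * sigma\<^sup>2 + L\<^sup>2) * (\<Sum>j<k. (a j)\<^sup>2)
             + 2 * L * G * (\<Sum>j<k. (real N - Abar j) * (a j)\<^sup>2)
             + D0
             + L\<^sup>2 * (\<Sum>j<k. (real N - Abar j)\<^sup>2 * (a j)\<^sup>2)"
    using T2 s1 n1 n2 n3 D0nn by linarith
  have lhs: "(\<integral>\<omega>. (\<Sum>j<k. a j * lagr f N (fst (iter \<omega> j)) (snd (iter \<omega> j))) / (\<Sum>j<k. a j) \<partial>M)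
           - lagr f N xs ls = T / Z"
  proof -
    have "(\<integral>\<omega>. (\<Sum>j<k. a j * lagr f N (fst (iter \<omega> j)) (snd (iter \<omega> j))) / (\<Sum>j<k. a j) \<partial>M)
       = (\<integral>\<omega>. (\<Sum>j<k. a j * Lg j \<omega>) \<partial>M) / Z"
      unfolding Lg_def xx_def ll_def Z_def by simp
    also have "(\<integral>\<omega>. (\<Sum>j<k. a j * Lg j \<omega>) \<partial>M) = (\<Sum>j<k. a j * EL j)"
      unfolding EL_def using intLg
      by (subst Bochner_Integration.integral_sum) auto
    also have "(\<Sum>j<k. a j * EL j) = T + Z * Ls"
      unfolding T_def Z_def by (simp add: algebra_simps sum.distrib sum_distrib_left sum_subtractf)
    finally show ?thesis using Z_pos unfolding Ls_def by (simp add: field_simps)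
  qed
  have fin: "T / Z \<le> (1 / Z) * (R * G * (\<Sum>j<k. (real N - Abar j) * a j)
             + (beta * sigma\<^sup>2 + L\<^sup>2) * (\<Sum>j<k. (a j)\<^sup>2)
             + 2 * L * G * (\<Sum>j<k. (real N - Abar j) * (a j)\<^sup>2)
             + D0
             + L\<^sup>2 * (\<Sum>j<k. (real N - Abar j)\<^sup>2 * (a j)\<^sup>2))"
    using divide_right_mono[OF Tb, of Z] Z_pos by simp
  show ?thesis
    apply (subst lhs)
    unfolding ED0 Z_def[symmetric] by (rule fin)
qed

end
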